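(* Let $T$ be a filtered deterministic transducer with input category $\mathcal{C}$, output category $\mathcal{D}$, structure functor $F:\mathcal{C}\to\mathcal{D}^S$, primary input $\mathcal{C}$-signature $X\to Y$, auxiliary input $\mathcal{D}$-signatures $X_1\to Y_1,\dots,X_n\to Y_n$, output $\mathcal{D}$-signatures $X_1'\to Y_1',\dots,X_m'\to Y_m'$, input state space $S(F(X))$ and output state space $S(F(Y))$. Suppose that $S(F(Y))$ is finite, and that for every $x\in S(F(X))$ the linear coefficient $a$ of the degree $ax+b$ of every variable in $V_{F(X)}(x)$ is nonzero. Then there is a fixed integer $k$, not depending on $\deg(\alpha)$, such that for every $x\in S(F(X))$ and every primary input morphism $\alpha:X\to Y$ in $\mathcal{C}$, in each of the morphisms assigned by the output function $V_{F(\alpha)}(x)$ to the output signatures $X_j'\to Y_j'$ (which are variables at the state $S(F(\alpha))(x)$), the number of copies of the free generator corresponding to each auxiliary input $X_i\to Y_i$ is at most $k$.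
   Context: A filtered-morphism category is a locally small symmetric monoidal (here also copy-discard) category in which every morphism $f$ has a degree $\deg(f)\in\mathbb{N}$, identities have degree $0$, and $\deg(g\circ f)\le\deg(g)+\deg(f)$ (i.e. it is enriched over filtered sets, where a filtered set is a set with a function to $\mathbb{N}$ and morphisms are degree-non-increasing functions, with monoidal product the cartesian product with degrees added). Linear polynomials $ax+b$ with $a,b\in\mathbb{N}$ are partially ordered by $ax+b\le cx+d$ iff $a\le c$ and $b\le d$. Given a filtered-morphism category $\mathcal{D}$ and a list of signatures $X_i\to Y_i$ with degrees $a_ix+b_i$, the freely-generated $\mathbb{N}^2$-filtered category $\mathcal{D}[X_1\to Y_1,\dots]$ has the objects of $\mathcal{D}$, and morphisms built by composing and taking monoidal products of $\mathcal{D}$-morphisms and free generators $X_i\to Y_i$; the degree of such a morphism is the linear polynomial equal to the sum of the degrees $a_ix+b_i$ of the generator occurrences plus the ($\mathcal{D}$-)degrees of the maximal $\mathcal{D}$-parts (as constants). The filtered state category $\mathcal{D}^S$: an object $A$ consists of a set $S(A)$ (state space) and, for each $s\in S(A)$, a finite ordered list $V_A(s)$ of variables, i.e. pairs of $\mathcal{D}$-objects written $X\to Y$, each with a degree $ax+b$, $a,b\in\mathbb{N}$. A morphism $f:A\to B$ of degree $\ell\in\mathbb{N}$ consists of a function $S(f):S(A)\to S(B)$ (state transition) and, for each $s\in S(A)$, an output function $V_f(s)$ assigning to each variable $X'\to Y'$ at $S(f)(s)$ of degree $a'x+b'$ a morphism $X'\to Y'$ in the free $\mathbb{N}^2$-filtered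 category over $\mathcal{D}$ generated by the variables at $s$ (with their degrees), of degree at most $a'x+(a'\ell+b')$. Substituting actual $\mathcal{D}$-morphisms for the generators gives output $\mathcal{D}$-morphisms. Composition composes state transitions and substitutes output functions; the monoidal product takes products of state spaces and concatenates variable lists. A filtered functor is a functor $F$ between filtered-morphism categories with $\deg F(\alpha)\le\deg(\alpha)$ for all morphisms $\alpha$. A filtered deterministic transducer consists of filtered-morphism copy-discard categories $\mathcal{C}$ (input) and $\mathcal{D}$ (output), a primary input $\mathcal{C}$-signature $X\to Y$, auxiliary input $\mathcal{D}$-signatures $X_1\to Y_1,\dots,X_n\to Y_n$, output $\mathcal{D}$-signatures $X'_1\to Y'_1,\dots,X'_m\to Y'_m$, and a strong monoidal filtered functor $F:\mathcal{C}\to\mathcal{D}^S$ such that for every $s\in S(F(X))$ the variables at $s$ form a prefix of $X_1\to Y_1,\dots,X_n\to Y_n$, and for every $t\in S(F(Y))$ the list $X'_1\to Y'_1,\dots,X'_m\to Y'_m$ is a prefix of the variables at $t$. Given an input state $s\in S(F(X))$, a primary input $\alpha:X\to Y$ and auxiliary input morphisms $\beta_i:X_i\to Y_i$, the transducer outputs the state $S(F(\alpha))(s)$ and, for each output signature, the morphism assigned by $V_{F(\alpha)}(s)$ with the generators replaced by the $\beta_i$. *)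

theory Defs
  imports Main "HOL-Library.Sublist"
begin

text \<open>
  Output category D (filtered-morphism symmetric monoidal category), given by its data:
  objects of type 'o, morphisms of type 'm, with domain, codomain, composition
  (compD g f = g after f), monoidal product on morphisms and objects, and degrees.
\<close>

record ('o, 'm) fcat =
  domD  :: "'m \<Rightarrow> 'o"
  codD  :: "'m \<Rightarrow> 'o"
  compD :: "'m \<Rightarrow> 'm \<Rightarrow> 'm"
  tensD :: "'m \<Rightarrow> 'm \<Rightarrow> 'm"
  tensO :: "'o \<Rightarrow> 'o \<Rightarrow> 'o"
  degD  :: "'m \<Rightarrow> nat"

definition filtered_cat :: "('o, 'm) fcat \<Rightarrow> bool" where
  "filtered_cat D \<longleftrightarrow>
     (\<forall>f g. codD D f = domD D g \<longrightarrow>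
        domD D (compD D g f) = domD D f \<and> codD D (compD D g f) = codD D g \<and>
        degD D (compD D g f) \<le> degD D g + degD D f) \<and>
     (\<forall>f g. domD D (tensD D f g) = tensO D (domD D f) (domD D g) \<and>
        codD D (tensD D f g) = tensO D (codD D f) (codD D g) \<and>
        degD D (tensD D f g) \<le> degD D f + degD D g)"

text \<open>A variable: a pair of D-objects X \<rightarrow> Y together with a degree a x + b,
  written (X, Y, a, b).\<close>
type_synonym 'o var = "'o \<times> 'o \<times> nat \<times> nat"

text \<open>Morphism expressions of the free N^2-filtered category D[vars]:
  D-morphisms, free generators (by index into the variable list),
  composition (FComp u t = u after t) and monoidal product.\<close>
datatype 'm fterm = DM 'm | Gen nat | FComp "'m fterm" "'m fterm" | FTens "'m fterm" "'m fterm"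

inductive wt :: "('o, 'm) fcat \<Rightarrow> 'o var list \<Rightarrow> 'm fterm \<Rightarrow> 'o \<Rightarrow> 'o \<Rightarrow> bool"
  for D vs where
  wt_DM: "wt D vs (DM f) (domD D f) (codD D f)"
| wt_Gen: "i < length vs \<Longrightarrow> vs ! i = (X, Y, a, b) \<Longrightarrow> wt D vs (Gen i) X Y"
| wt_Comp: "wt D vs t X Z \<Longrightarrow> wt D vs u Z Y \<Longrightarrow> wt D vs (FComp u t) X Y"
| wt_Tens: "wt D vs t X1 Y1 \<Longrightarrow> wt D vs u X2 Y2 \<Longrightarrow>
            wt D vs (FTens t u) (tensO D X1 X2) (tensO D Y1 Y2)"

fun noGen :: "'m fterm \<Rightarrow> bool" where
  "noGen (DM f) = True"
| "noGen (Gen i) = False"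
| "noGen (FComp u t) = (noGen u \<and> noGen t)"
| "noGen (FTens t u) = (noGen t \<and> noGen u)"

fun evalD :: "('o, 'm) fcat \<Rightarrow> 'm fterm \<Rightarrow> 'm" where
  "evalD D (DM f) = f"
| "evalD D (Gen i) = undefined"
| "evalD D (FComp u t) = compD D (evalD D u) (evalD D t)"
| "evalD D (FTens t u) = tensD D (evalD D t) (evalD D u)"

text \<open>Degree (a, b) standing for a x + b: sum of the degrees of the generator occurrences
  plus the D-degrees of the maximal D-parts (as constants).\<close>
fun fdeg :: "('o, 'm) fcat \<Rightarrow> 'o var list \<Rightarrow> 'm fterm \<Rightarrow> nat \<times> nat" where
  "fdeg D vs t =
    (if noGen t then (0, degD D (evalD D t)) else
     (case t of
        Gen i \<Rightarrow> (case vs ! i of (X, Y, a, b) \<Rightarrow> (a, b))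
      | FComp u s \<Rightarrow> (fst (fdeg D vs u) + fst (fdeg D vs s), snd (fdeg D vs u) + snd (fdeg D vs s))
      | FTens s u \<Rightarrow> (fst (fdeg D vs s) + fst (fdeg D vs u), snd (fdeg D vs s) + snd (fdeg D vs u))
      | DM f \<Rightarrow> (0, degD D f)))"

definition lin_le :: "nat \<times> nat \<Rightarrow> nat \<times> nat \<Rightarrow> bool" where
  "lin_le p q \<longleftrightarrow> fst p \<le> fst q \<and> snd p \<le> snd q"

fun gen_count :: "nat \<Rightarrow> 'm fterm \<Rightarrow> nat" where
  "gen_count i (DM f) = 0"
| "gen_count i (Gen j) = (if i = j then 1 else 0)"
| "gen_count i (FComp u t) = gen_count i u + gen_count i t"
| "gen_count i (FTens t u) = gen_count i t + gen_count i u"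

text \<open>A morphism A \<rightarrow> B of degree l in the filtered state category D^S, where
  A = (SA, VA) and B = (SB, VB); tr is the state transition and out s j the output
  assigned to the j-th variable at tr s.\<close>
definition DS_mor ::
  "('o, 'm) fcat \<Rightarrow> 's set \<Rightarrow> ('s \<Rightarrow> 'o var list) \<Rightarrow> 't set \<Rightarrow> ('t \<Rightarrow> 'o var list)
   \<Rightarrow> ('s \<Rightarrow> 't) \<Rightarrow> ('s \<Rightarrow> nat \<Rightarrow> 'm fterm) \<Rightarrow> nat \<Rightarrow> bool" where
  "DS_mor D SA VA SB VB tr out l \<longleftrightarrow>
     (\<forall>s\<in>SA. tr s \<in> SB \<and>
        (\<forall>j < length (VB (tr s)).
           (case VB (tr s) ! j of (X', Y', a', b') \<Rightarrow>
              wt D (VA s) (out s j) X' Y' \<and>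
              lin_le (fdeg D (VA s) (out s j)) (a', a' * l + b'))))"

definition sig_of :: "'o var \<Rightarrow> 'o \<times> 'o" where
  "sig_of v = (case v of (X, Y, a, b) \<Rightarrow> (X, Y))"

text \<open>The data of a filtered deterministic transducer, as far as the primary input
  signature X \<rightarrow> Y is concerned: HomXY is the set of C-morphisms X \<rightarrow> Y with C-degrees
  degC; S(F X) = SX with variables VX; S(F Y) = SY with variables VY; F(alpha) has
  state transition Ftr alpha and output function Fout alpha, and is a D^S morphism of
  degree at most deg alpha (F filtered); aux and outs are the auxiliary input and output
  D-signatures.\<close>
definition transducer ::
  "('o, 'm) fcat \<Rightarrow> 'c set \<Rightarrow> ('c \<Rightarrow> nat) \<Rightarrow> 's set \<Rightarrow> ('s \<Rightarrow> 'o var list)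
   \<Rightarrow> 't set \<Rightarrow> ('t \<Rightarrow> 'o var list) \<Rightarrow> ('c \<Rightarrow> 's \<Rightarrow> 't) \<Rightarrow> ('c \<Rightarrow> 's \<Rightarrow> nat \<Rightarrow> 'm fterm)
   \<Rightarrow> ('o \<times> 'o) list \<Rightarrow> ('o \<times> 'o) list \<Rightarrow> bool" where
  "transducer D HomXY degC SX VX SY VY Ftr Fout aux outs \<longleftrightarrow>
     filtered_cat D \<and>
     (\<forall>\<alpha>\<in>HomXY. \<exists>l \<le> degC \<alpha>. DS_mor D SX VX SY VY (Ftr \<alpha>) (Fout \<alpha>) l) \<and>
     (\<forall>s\<in>SX. prefix (map sig_of (VX s)) aux) \<and>
     (\<forall>t\<in>SY. prefix outs (map sig_of (VY t)))"

end

theory Submission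
  imports Defs
begin

lemma noGen_count: "noGen t \<Longrightarrow> gen_count i t = 0"
  by (induction t) auto

lemma fdeg_Gen: "fdeg D vs (Gen i) = (case vs ! i of (X, Y, a, b) \<Rightarrow> (a, b))"
  by (subst fdeg.simps) simp

lemma fdeg_Comp: "\<not> noGen (FComp u t) \<Longrightarrow>
  fst (fdeg D vs (FComp u t)) = fst (fdeg D vs u) + fst (fdeg D vs t)"
  by (subst fdeg.simps) simp

lemma fdeg_Tens: "\<not> noGen (FTens u t) \<Longrightarrow>
  fst (fdeg D vs (FTens u t)) = fst (fdeg D vs u) + fst (fdeg D vs t)"
  by (subst fdeg.simps) simp

lemma count_le_fdeg:
  assumes "wt D vs t X Y"
    and nz: "\<forall>v\<in>set vs. (case v of (X, Y, a, b) \<Rightarrow> a \<noteq> 0)"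
  shows "gen_count i t \<le> fst (fdeg D vs t)"
  using assms(1)
proof (induction rule: wt.induct)
  case (wt_DM f)
  then show ?case by simp
next
  case (wt_Gen j X Y a b)
  have "vs ! j \<in> set vs" using wt_Gen(1) by (rule nth_mem)
  with nz wt_Gen have "a \<noteq> 0" by fastforce
  then show ?case using wt_Gen by (simp add: fdeg_Gen)
next
  case (wt_Comp t X Z u Y)
  show ?case
  proof (cases "noGen (FComp u t)")
    case True then show ?thesis by (simp add: noGen_count del: gen_count.simps)
  next
    case False then show ?thesis using wt_Comp by (simp add: fdeg_Comp del: fdeg.simps)
  qed
next
  case (wt_Tens t X1 Y1 u X2 Y2)
  show ?case
  proof (cases "noGen (FTens t u)")
    case True then show ?thesis by (simp add: noGen_count del: gen_count.simps)
  next
    case False then show ?thesis using wt_Tens by (simp add: fdeg_Tens del: fdeg.simps)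
  qed
qed

theorem proposition3p11:
  fixes D :: "('o, 'm) fcat"
    and HomXY :: "'c set" and degC :: "'c \<Rightarrow> nat"
    and SX :: "'s set" and VX :: "'s \<Rightarrow> 'o var list"
    and SY :: "'t set" and VY :: "'t \<Rightarrow> 'o var list"
    and Ftr :: "'c \<Rightarrow> 's \<Rightarrow> 't" and Fout :: "'c \<Rightarrow> 's \<Rightarrow> nat \<Rightarrow> 'm fterm"
    and aux outs :: "('o \<times> 'o) list"
  assumes T: "transducer D HomXY degC SX VX SY VY Ftr Fout aux outs"
    and finY: "finite SY"
    and nz: "\<forall>s\<in>SX. \<forall>v\<in>set (VX s). (case v of (X, Y, a, b) \<Rightarrow> a \<noteq> 0)"
  shows "\<exists>k::nat. \<forall>s\<in>SX. \<forall>\<alpha>\<in>HomXY. \<forall>j < length outs. \<forall>i < length aux.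
           gen_count i (Fout \<alpha> s j) \<le> k"
proof -
  define A where "A t j = fst (snd (snd (VY t ! j)))" for t j
  define k where "k = (\<Sum>t\<in>SY. \<Sum>j<length outs. A t j)"
  have kb: "A t j \<le> k" if "t \<in> SY" "j < length outs" for t j
  proof -
    have "A t j \<le> (\<Sum>j<length outs. A t j)"
      using that by (intro member_le_sum) auto
    also have "\<dots> \<le> k" unfolding k_def
      using that finY by (intro member_le_sum[where f = "\<lambda>t. \<Sum>j<length outs. A t j"]) auto
    finally show ?thesis .
  qed
  show ?thesis
  proof (intro exI[of _ k] ballI allI impI)
    fix s \<alpha> j i
    assume s: "s \<in> SX" and a: "\<alpha> \<in> HomXY" and j: "j < length outs"
    from T a obtain l where "DS_mor D SX VX SY VY (Ftr \<alpha>) (Fout \<alpha>) l"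
      unfolding transducer_def by blast
    with s have tr: "Ftr \<alpha> s \<in> SY" and
      H: "\<forall>j < length (VY (Ftr \<alpha> s)).
           (case VY (Ftr \<alpha> s) ! j of (X', Y', a', b') \<Rightarrow>
              wt D (VX s) (Fout \<alpha> s j) X' Y' \<and>
              lin_le (fdeg D (VX s) (Fout \<alpha> s j)) (a', a' * l + b'))"
      unfolding DS_mor_def by auto
    from T tr have "prefix outs (map sig_of (VY (Ftr \<alpha> s)))"
      unfolding transducer_def by blast
    hence "length outs \<le> length (VY (Ftr \<alpha> s))" using prefix_length_le by fastforce
    with j have jl: "j < length (VY (Ftr \<alpha> s))" by simp
    obtain X' Y' a' b' where eq: "VY (Ftr \<alpha> s) ! j = (X', Y', a', b')"
      by (cases "VY (Ftr \<alpha> s) ! j") auto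
    from H jl eq have w: "wt D (VX s) (Fout \<alpha> s j) X' Y'"
      and le: "lin_le (fdeg D (VX s) (Fout \<alpha> s j)) (a', a' * l + b')" by auto
    have "gen_count i (Fout \<alpha> s j) \<le> fst (fdeg D (VX s) (Fout \<alpha> s j))"
      using count_le_fdeg[OF w] nz s by blast
    also have "\<dots> \<le> a'" using le by (simp add: lin_le_def)
    also have "a' = A (Ftr \<alpha> s) j" using eq by (simp add: A_def)
    also have "\<dots> \<le> k" using kb tr j by blast
    finally show "gen_count i (Fout \<alpha> s j) \<le> k" .
  qed
qed

end
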